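(* Let $\kappa$ be an infinite cardinal. The set $S=T\cap M_3[\mathcal{F}(\kappa)]$ is a bounded sublattice of the lattice $M_3[\mathcal{F}(\kappa)]$.
   Context: $\mathcal{F}(\kappa)$ is the Boolean lattice of subsets $X\subseteq\kappa$ that are finite or cofinite. For sets $A,B,C$, $\mu(A,B,C)=(A\cap B)\cup(A\cap C)\cup(B\cap C)$. $T=\{(A,B,C)\in\mathcal{F}(\kappa)^3 : C\setminus\mu(A,B,C)\text{ is finite}\}$. A triple is balanced if $A\cap B=A\cap C=B\cap C$; $M_3[\mathcal{F}(\kappa)]$ is the set of balanced triples in $\mathcal{F}(\kappa)^3$, a lattice under the componentwise order with componentwise intersection as meet and join $(A,B,C)\vee(A',B',C')=(U_1\cup m,U_2\cup m,U_3\cup m)$ where $U_1=A\cup A'$, $U_2=B\cup B'$, $U_3=C\cup C'$, $m=\mu(U_1,U_2,U_3)$; its bounds are $(\emptyset,\emptyset,\emptyset)$ and $(\kappa,\kappa,\kappa)$. *)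

theory Defs
  imports Main
begin

text \<open>The Boolean lattice F(kappa) of finite or cofinite subsets of the type 'a
  (kappa is represented by the universe of an infinite type 'a).\<close>
definition FinCofin :: "'a set set" where
  "FinCofin = {X. finite X \<or> finite (- X)}"

definition mu :: "'a set \<Rightarrow> 'a set \<Rightarrow> 'a set \<Rightarrow> 'a set" where
  "mu A B C = (A \<inter> B) \<union> (A \<inter> C) \<union> (B \<inter> C)"

type_synonym 'a triple = "'a set \<times> 'a set \<times> 'a set"

definition Tset :: "'a triple set" where
  "Tset = {(A, B, C). A \<in> FinCofin \<and> B \<in> FinCofin \<and> C \<in> FinCofin
                      \<and> finite (C - mu A B C)}"

definition balanced :: "'a triple \<Rightarrow> bool" where
  "balanced t = (case t of (A, B, C) \<Rightarrow> A \<inter> B = A \<inter> C \<and> A \<inter> C = B \<inter> C)"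

definition M3 :: "'a triple set" where
  "M3 = {(A, B, C). A \<in> FinCofin \<and> B \<in> FinCofin \<and> C \<in> FinCofin \<and> balanced (A, B, C)}"

definition meet3 :: "'a triple \<Rightarrow> 'a triple \<Rightarrow> 'a triple" where
  "meet3 s t = (case s of (A, B, C) \<Rightarrow> case t of (A', B', C') \<Rightarrow>
                  (A \<inter> A', B \<inter> B', C \<inter> C'))"

definition join3 :: "'a triple \<Rightarrow> 'a triple \<Rightarrow> 'a triple" where
  "join3 s t = (case s of (A, B, C) \<Rightarrow> case t of (A', B', C') \<Rightarrow>
                  (let U1 = A \<union> A'; U2 = B \<union> B'; U3 = C \<union> C'; m = mu U1 U2 U3
                   in (U1 \<union> m, U2 \<union> m, U3 \<union> m)))"

definition bot3 :: "'a triple" where "bot3 = ({}, {}, {})"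
definition top3 :: "'a triple" where "top3 = (UNIV, UNIV, UNIV)"

definition bounded_sublattice_M3 :: "'a triple set \<Rightarrow> bool" where
  "bounded_sublattice_M3 S \<longleftrightarrow> S \<subseteq> M3
     \<and> (\<forall>s\<in>S. \<forall>t\<in>S. meet3 s t \<in> S \<and> join3 s t \<in> S)
     \<and> bot3 \<in> S \<and> top3 \<in> S"

end

theory Submission
  imports Defs
begin

lemma fc_un: "X \<in> FinCofin \<Longrightarrow> Y \<in> FinCofin \<Longrightarrow> X \<union> Y \<in> FinCofin"
  unfolding FinCofin_def by (auto simp: Compl_Un intro: finite_subset)

lemma fc_int: "X \<in> FinCofin \<Longrightarrow> Y \<in> FinCofin \<Longrightarrow> X \<inter> Y \<in> FinCofin"
  unfolding FinCofin_def by (auto simp: Compl_Int intro: finite_subset)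

lemma fc_mu: "X \<in> FinCofin \<Longrightarrow> Y \<in> FinCofin \<Longrightarrow> Z \<in> FinCofin \<Longrightarrow> mu X Y Z \<in> FinCofin"
  unfolding mu_def by (intro fc_un fc_int)

lemma memS: "(A,B,C) \<in> Tset \<inter> M3 \<longleftrightarrow> A \<in> FinCofin \<and> B \<in> FinCofin \<and> C \<in> FinCofin
   \<and> A \<inter> B = A \<inter> C \<and> A \<inter> C = B \<inter> C \<and> finite (C - A \<inter> B)"
proof -
  have "A \<inter> B = A \<inter> C \<and> A \<inter> C = B \<inter> C \<Longrightarrow> mu A B C = A \<inter> B"
    unfolding mu_def by blast
  then show ?thesis unfolding Tset_def M3_def balanced_def by auto
qed

theorem lemma3p3:
  assumes "infinite (UNIV :: 'a set)"
  shows "bounded_sublattice_M3 (Tset \<inter> (M3 :: 'a triple set))"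
  unfolding bounded_sublattice_M3_def
proof (intro conjI ballI)
  show "Tset \<inter> M3 \<subseteq> M3" by blast
next
  show "bot3 \<in> Tset \<inter> (M3 :: 'a triple set)" unfolding bot3_def memS FinCofin_def by auto
next
  show "top3 \<in> Tset \<inter> (M3 :: 'a triple set)" unfolding top3_def memS FinCofin_def by auto
next
  fix s t :: "'a triple" assume s: "s \<in> Tset \<inter> M3" and t: "t \<in> Tset \<inter> M3"
  obtain A B C where sd: "s = (A,B,C)" by (cases s) auto
  obtain A' B' C' where td: "t = (A',B',C')" by (cases t) auto
  note S = s[unfolded sd memS] and T = t[unfolded td memS]
  show "meet3 s t \<in> Tset \<inter> M3"
  proof -
    have md: "meet3 s t = (A \<inter> A', B \<inter> B', C \<inter> C')" unfolding sd td meet3_def by simp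
    show ?thesis unfolding md memS
  proof (intro conjI)
    show "A \<inter> A' \<in> FinCofin" "B \<inter> B' \<in> FinCofin" "C \<inter> C' \<in> FinCofin"
      using S T by (auto intro: fc_int)
    show "A \<inter> A' \<inter> (B \<inter> B') = A \<inter> A' \<inter> (C \<inter> C')" using S T by blast
    show "A \<inter> A' \<inter> (C \<inter> C') = B \<inter> B' \<inter> (C \<inter> C')" using S T by blast
    have "C \<inter> C' - A \<inter> A' \<inter> (B \<inter> B') \<subseteq> (C - A \<inter> B) \<union> (C' - A' \<inter> B')" by blast
    then show "finite (C \<inter> C' - A \<inter> A' \<inter> (B \<inter> B'))"
      using S T by (meson finite_UnI finite_subset)
  qed
  qed
  define m where "m = mu (A \<union> A') (B \<union> B') (C \<union> C')"
  have fm: "m \<in> FinCofin" unfolding m_def using S T by (intro fc_mu fc_un) auto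
  have j: "join3 s t = (A \<union> A' \<union> m, B \<union> B' \<union> m, C \<union> C' \<union> m)"
    unfolding sd td join3_def m_def Let_def by simp
  show "join3 s t \<in> Tset \<inter> M3"
    unfolding j memS
  proof (intro conjI)
    show "A \<union> A' \<union> m \<in> FinCofin" "B \<union> B' \<union> m \<in> FinCofin" "C \<union> C' \<union> m \<in> FinCofin"
      using S T fm by (auto intro: fc_un)
    show "(A \<union> A' \<union> m) \<inter> (B \<union> B' \<union> m) = (A \<union> A' \<union> m) \<inter> (C \<union> C' \<union> m)"
      unfolding m_def mu_def by blast
    show "(A \<union> A' \<union> m) \<inter> (C \<union> C' \<union> m) = (B \<union> B' \<union> m) \<inter> (C \<union> C' \<union> m)"
      unfolding m_def mu_def by blast
    have "C \<union> C' \<union> m - (A \<union> A' \<union> m) \<inter> (B \<union> B' \<union> m) \<subseteq> (C - A \<inter> B) \<union> (C' - A' \<inter> B')"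
      unfolding m_def mu_def by blast
    then show "finite (C \<union> C' \<union> m - (A \<union> A' \<union> m) \<inter> (B \<union> B' \<union> m))"
      using S T by (meson finite_UnI finite_subset)
  qed
qed

end
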